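(* Finite prime fields $\mathrm{F}_q$ locally approximate the field of real numbers: $\mathsf{lm}^{\mathrm{loc}}\, \mathrm{F}_q = \mathbb{R}$, i.e. the local ultraproduct of the finite fields $\mathrm{F}_q$ (with the emerging metric described below) is the field $\mathbb{R}$.
   Context: Let $\mathcal{D}$ be a non-principal ultrafilter on $\mathbb{N}$ containing the set of primes, and let ${}^*\mathbb{Z}$ be the corresponding ultrapower of $\mathbb{Z}$. Let $\mathfrak{q}\in {}^*\mathbb{Z}$ be the non-standard prime represented in the $q$-th coordinate by $q$, so that $\mathrm{F}={}^*\mathbb{Z}_{\mathfrak{q}}\cong \prod_\mathcal{D}\mathrm{F}_q$ is the pseudofinite field that is the ultraproduct of the finite prime fields $\mathrm{F}_q$. Assume there is a model ${}^f\mathbb{Z}$ of arithmetic with $\mathbb{Z}\prec {}^f\mathbb{Z}\prec {}^*\mathbb{Z}$ and $\mathfrak{q}> {}^f\mathbb{Z}$ (so $\mathfrak{q}$ exceeds every element of ${}^f\mathbb{Z}$), and let $\mathfrak{l}\in {}^f\mathbb{Z}_{>0}$ be an infinite integer; then $\mathfrak{l}^n<\mathfrak{q}$ for all $n\in\mathbb{N}$. Put ${}^f\mathbb{Z}_{/\mathfrak{l}}(n)=\{k\in {}^*\mathbb{Z}: |k|<\mathfrak{l}^n\}$, which embeds in $\mathrm{F}$ via $k\mapsto k \bmod \mathfrak{q}$. For $m\in\mathbb{N}$ let $S_m(\mathrm{F})=\{z\in\mathrm{F}: \exists k_1,k_2\in {}^f\mathbb{Z}_{/\mathfrak{l}}(m),\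 z=k_1k_2^{-1},\ |k_1|/|k_2|\le m\}$ and $\mathrm{F}_{/\mathfrak{l}}=\bigcup_m S_m(\mathrm{F})$, a subfield of $\mathrm{F}$. On it define the norm $\|z\|=\mathrm{st}(|k_1|/|k_2|)$ for the minimal pair $k_1,k_2$ with $z=k_1k_2^{-1}$ ($\mathrm{st}$ the standard part), and the distance $\mathsf{d}(z_1,z_2)=\|z_1-z_2\|$. The same definitions are applied to each finite field $\mathrm{F}_q$ by interpreting $\mathfrak{l}$ as its $q$-th coordinate $\mathfrak{l}(q)$; these sorts $S_m$ and distance form an emerging metric on the family $\mathrm{F}_q$. The local ultraproduct $\mathsf{lm}^{\mathrm{loc}}\,\mathrm{F}_q$ is defined as follows: take the substructure of the first-order ultraproduct with universe $\bigcup_{m\in\mathbb{N}} S_m$ (here $\mathrm{F}_{/\mathfrak{l}}$), and quotient by the relation $x_1\approx x_2 \iff \mathsf{d}(x_1,x_2)\le 1/n$ for all standard $n$; the result is a complete metric structure. *)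

theory Defs
  imports "HOL-Analysis.Analysis" "HOL-Number_Theory.Number_Theory"
begin

text \<open>Elements of the ultraproduct F of the prime fields F_q are represented by
  sequences x :: nat => int, the q-th coordinate being read modulo q; ring operations
  are coordinatewise.  D is the ultrafilter (a nat filter), l the sequence representing
  the infinite integer (its q-th coordinate l(q)).\<close>

definition srep :: "nat filter \<Rightarrow> (nat \<Rightarrow> int) \<Rightarrow> nat \<Rightarrow> (nat \<Rightarrow> int)
    \<Rightarrow> (nat \<Rightarrow> int) \<Rightarrow> (nat \<Rightarrow> int) \<Rightarrow> bool" where
  "srep D l m x k1 k2 \<longleftrightarrow>
     eventually (\<lambda>q. \<bar>k1 q\<bar> < l q ^ m \<and> \<bar>k2 q\<bar> < l q ^ m \<and> k2 q \<noteq> 0 \<and>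
                     [x q * k2 q = k1 q] (mod int q) \<and> \<bar>k1 q\<bar> \<le> int m * \<bar>k2 q\<bar>) D"

definition Sm :: "nat filter \<Rightarrow> (nat \<Rightarrow> int) \<Rightarrow> nat \<Rightarrow> (nat \<Rightarrow> int) set" where
  "Sm D l m = {x. \<exists>k1 k2. srep D l m x k1 k2}"

definition Floc :: "nat filter \<Rightarrow> (nat \<Rightarrow> int) \<Rightarrow> (nat \<Rightarrow> int) set" where
  "Floc D l = (\<Union>m. Sm D l m)"

definition fnorm :: "nat filter \<Rightarrow> (nat \<Rightarrow> int) \<Rightarrow> (nat \<Rightarrow> int) \<Rightarrow> real" where
  "fnorm D l x = (THE r. \<exists>m k1 k2. srep D l m x k1 k2 \<and>
      ((\<lambda>q. real_of_int \<bar>k1 q\<bar> / real_of_int \<bar>k2 q\<bar>) \<longlongrightarrow> r) D)"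

definition fdist :: "nat filter \<Rightarrow> (nat \<Rightarrow> int) \<Rightarrow> (nat \<Rightarrow> int) \<Rightarrow> (nat \<Rightarrow> int) \<Rightarrow> real" where
  "fdist D l x y = fnorm D l (\<lambda>q. x q - y q)"

end

theory Submission
  imports Defs
begin


lemma pt_eq:
  fixes a b c d X L Q :: int and m m' :: nat
  assumes "\<bar>a\<bar> < L^m" "\<bar>b\<bar> < L^m" "\<bar>c\<bar> < L^m'" "\<bar>d\<bar> < L^m'"
    "[X*b = a] (mod Q)" "[X*d = c] (mod Q)" "L \<ge> 2" "L^(m+m'+1) < Q"
  shows "a*d = c*b"
proof (rule ccontr)
  assume ne: "a*d \<noteq> c*b"
  have "Q dvd (X*b - a)" "Q dvd (X*d - c)" using assms(5,6) by (simp_all add: cong_iff_dvd_diff)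
  hence "Q dvd ((X*d - c)*b - (X*b - a)*d)" by (simp add: dvd_diff)
  moreover have "(X*d - c)*b - (X*b - a)*d = a*d - c*b" by (simp add: algebra_simps)
  ultimately have dv: "Q dvd (a*d - c*b)" by simp
  have "\<bar>a\<bar>*\<bar>d\<bar> < L^m * L^m'" by (rule mult_strict_mono) (use assms in auto)
  moreover have "\<bar>c\<bar>*\<bar>b\<bar> < L^m' * L^m" by (rule mult_strict_mono) (use assms in auto)
  moreover have "\<bar>a*d - c*b\<bar> \<le> \<bar>a\<bar>*\<bar>d\<bar> + \<bar>c\<bar>*\<bar>b\<bar>"
    by (metis abs_mult abs_triangle_ineq4)
  ultimately have "\<bar>a*d - c*b\<bar> < 2 * L^(m+m')" by (simp add: power_add algebra_simps)
  also have "2 * L^(m+m') \<le> L^(m+m'+1)" using assms(7) by simp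
  finally have "\<bar>a*d - c*b\<bar> < Q" using assms(8) by simp
  moreover have "\<bar>Q\<bar> \<le> \<bar>a*d - c*b\<bar>" using dvd_imp_le_int[OF _ dv] ne by simp
  ultimately show False by simp
qed

lemma pt_ops:
  fixes a b c d X Y L Q :: int and m m' :: nat
  assumes "\<bar>a\<bar> < L^m" "\<bar>b\<bar> < L^m" "\<bar>c\<bar> < L^m'" "\<bar>d\<bar> < L^m'" "b \<noteq> 0" "d \<noteq> 0"
    "[X*b = a] (mod Q)" "[Y*d = c] (mod Q)" "\<bar>a\<bar> \<le> int m * \<bar>b\<bar>" "\<bar>c\<bar> \<le> int m' * \<bar>d\<bar>" "L \<ge> 2"
  defines "M \<equiv> m*m'+m+m'+1"
  shows "\<bar>a*d + c*b\<bar> < L^M \<and> \<bar>b*d\<bar> < L^M \<and> b*d \<noteq> 0 \<and> [(X+Y)*(b*d) = a*d + c*b] (mod Q)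
      \<and> \<bar>a*d + c*b\<bar> \<le> int M * \<bar>b*d\<bar>"
    "\<bar>a*d - c*b\<bar> < L^M \<and> \<bar>b*d\<bar> < L^M \<and> b*d \<noteq> 0 \<and> [(X-Y)*(b*d) = a*d - c*b] (mod Q)
      \<and> \<bar>a*d - c*b\<bar> \<le> int M * \<bar>b*d\<bar>"
    "\<bar>a*c\<bar> < L^M \<and> \<bar>b*d\<bar> < L^M \<and> b*d \<noteq> 0 \<and> [(X*Y)*(b*d) = a*c] (mod Q)
      \<and> \<bar>a*c\<bar> \<le> int M * \<bar>b*d\<bar>"
proof -
  have p1: "L^(m+m') \<le> L^M" "2*L^(m+m') \<le> L^M"
  proof -
    have "2*L^(m+m') \<le> L^(m+m'+1)" using assms(11) by simp
    also have "\<dots> \<le> L^M" by (rule power_increasing) (use assms(11) in \<open>auto simp: M_def\<close>)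
    finally show two: "2*L^(m+m') \<le> L^M" .
    have "0 \<le> L^(m+m')" using assms(11) by simp
    with two show "L^(m+m') \<le> L^M" by linarith
  qed
  have ad: "\<bar>a\<bar>*\<bar>d\<bar> < L^m * L^m'" by (rule mult_strict_mono) (use assms in auto)
  have cb: "\<bar>c\<bar>*\<bar>b\<bar> < L^m' * L^m" by (rule mult_strict_mono) (use assms in auto)
  have ac: "\<bar>a\<bar>*\<bar>c\<bar> < L^m * L^m'" by (rule mult_strict_mono) (use assms in auto)
  have bd: "\<bar>b\<bar>*\<bar>d\<bar> < L^m * L^m'" by (rule mult_strict_mono) (use assms in auto)
  have bdL: "\<bar>b*d\<bar> < L^M" using bd p1 by (simp add: power_add abs_mult)
  have bd0: "b*d \<noteq> 0" using assms by simp
  have sadd: "\<bar>a*d + c*b\<bar> < L^M"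
  proof -
    have "\<bar>a*d + c*b\<bar> \<le> \<bar>a\<bar>*\<bar>d\<bar> + \<bar>c\<bar>*\<bar>b\<bar>" by (metis abs_mult abs_triangle_ineq)
    also have "\<dots> < 2*L^(m+m')" using ad cb by (simp add: power_add algebra_simps)
    finally show ?thesis using p1 by simp
  qed
  have ssub: "\<bar>a*d - c*b\<bar> < L^M"
  proof -
    have "\<bar>a*d - c*b\<bar> \<le> \<bar>a\<bar>*\<bar>d\<bar> + \<bar>c\<bar>*\<bar>b\<bar>" by (metis abs_mult abs_triangle_ineq4)
    also have "\<dots> < 2*L^(m+m')" using ad cb by (simp add: power_add algebra_simps)
    finally show ?thesis using p1 by simp
  qed
  have smul: "\<bar>a*c\<bar> < L^M" using ac p1 by (simp add: power_add abs_mult)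
  have d1: "Q dvd (X*b - a)" "Q dvd (Y*d - c)" using assms(7,8) by (simp_all add: cong_iff_dvd_diff)
  have cadd: "[(X+Y)*(b*d) = a*d + c*b] (mod Q)"
  proof -
    have "(X+Y)*(b*d) - (a*d + c*b) = (X*b - a)*d + (Y*d - c)*b" by (simp add: algebra_simps)
    moreover have "Q dvd (X*b - a)*d + (Y*d - c)*b" using d1 by simp
    ultimately show ?thesis by (simp add: cong_iff_dvd_diff)
  qed
  have csub: "[(X-Y)*(b*d) = a*d - c*b] (mod Q)"
  proof -
    have "(X-Y)*(b*d) - (a*d - c*b) = (X*b - a)*d - (Y*d - c)*b" by (simp add: algebra_simps)
    moreover have "Q dvd (X*b - a)*d - (Y*d - c)*b" using d1 by simp
    ultimately show ?thesis by (simp add: cong_iff_dvd_diff)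
  qed
  have cmul: "[(X*Y)*(b*d) = a*c] (mod Q)"
  proof -
    have "(X*Y)*(b*d) - a*c = (X*b - a)*(Y*d) + a*(Y*d - c)" by (simp add: algebra_simps)
    moreover have "Q dvd (X*b - a)*(Y*d) + a*(Y*d - c)" using d1 by simp
    ultimately show ?thesis by (simp add: cong_iff_dvd_diff)
  qed
  have r1: "\<bar>a\<bar>*\<bar>d\<bar> \<le> int m * \<bar>b\<bar> * \<bar>d\<bar>" using assms(9) by (simp add: mult_right_mono)
  have r2: "\<bar>c\<bar>*\<bar>b\<bar> \<le> int m' * \<bar>d\<bar> * \<bar>b\<bar>" using assms(10) by (simp add: mult_right_mono)
  have r3: "\<bar>a\<bar>*\<bar>c\<bar> \<le> (int m * \<bar>b\<bar>) * (int m' * \<bar>d\<bar>)"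
    by (rule mult_mono) (use assms(9,10) in auto)
  have bdnn: "0 \<le> \<bar>b\<bar>*\<bar>d\<bar>" by simp
  have "int (m + m') \<le> int M" "int (m*m') \<le> int M" by (simp_all add: M_def)
  hence mm: "int m + int m' \<le> int M" "int m * int m' \<le> int M" by simp_all
  have radd: "\<bar>a*d + c*b\<bar> \<le> int M * \<bar>b*d\<bar>"
  proof -
    have "\<bar>a*d + c*b\<bar> \<le> \<bar>a\<bar>*\<bar>d\<bar> + \<bar>c\<bar>*\<bar>b\<bar>" by (metis abs_mult abs_triangle_ineq)
    also have "\<dots> \<le> (int m + int m') * (\<bar>b\<bar>*\<bar>d\<bar>)" using r1 r2 by (simp add: algebra_simps)
    also have "\<dots> \<le> int M * (\<bar>b\<bar>*\<bar>d\<bar>)" by (rule mult_right_mono[OF mm(1) bdnn])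
    finally show ?thesis by (simp add: abs_mult)
  qed
  have rsub: "\<bar>a*d - c*b\<bar> \<le> int M * \<bar>b*d\<bar>"
  proof -
    have "\<bar>a*d - c*b\<bar> \<le> \<bar>a\<bar>*\<bar>d\<bar> + \<bar>c\<bar>*\<bar>b\<bar>" by (metis abs_mult abs_triangle_ineq4)
    also have "\<dots> \<le> (int m + int m') * (\<bar>b\<bar>*\<bar>d\<bar>)" using r1 r2 by (simp add: algebra_simps)
    also have "\<dots> \<le> int M * (\<bar>b\<bar>*\<bar>d\<bar>)" by (rule mult_right_mono[OF mm(1) bdnn])
    finally show ?thesis by (simp add: abs_mult)
  qed
  have rmul: "\<bar>a*c\<bar> \<le> int M * \<bar>b*d\<bar>"
  proof -
    have "\<bar>a*c\<bar> \<le> (int m * int m') * (\<bar>b\<bar>*\<bar>d\<bar>)" using r3 by (simp add: abs_mult algebra_simps)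
    also have "\<dots> \<le> int M * (\<bar>b\<bar>*\<bar>d\<bar>)" by (rule mult_right_mono[OF mm(2) bdnn])
    finally show ?thesis by (simp add: abs_mult)
  qed
  show "\<bar>a*d + c*b\<bar> < L^M \<and> \<bar>b*d\<bar> < L^M \<and> b*d \<noteq> 0 \<and> [(X+Y)*(b*d) = a*d + c*b] (mod Q)
      \<and> \<bar>a*d + c*b\<bar> \<le> int M * \<bar>b*d\<bar>" using sadd bdL bd0 cadd radd by blast
  show "\<bar>a*d - c*b\<bar> < L^M \<and> \<bar>b*d\<bar> < L^M \<and> b*d \<noteq> 0 \<and> [(X-Y)*(b*d) = a*d - c*b] (mod Q)
      \<and> \<bar>a*d - c*b\<bar> \<le> int M * \<bar>b*d\<bar>" using ssub bdL bd0 csub rsub by blast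
  show "\<bar>a*c\<bar> < L^M \<and> \<bar>b*d\<bar> < L^M \<and> b*d \<noteq> 0 \<and> [(X*Y)*(b*d) = a*c] (mod Q)
      \<and> \<bar>a*c\<bar> \<le> int M * \<bar>b*d\<bar>" using smul bdL bd0 cmul rmul by blast
qed



definition phi :: "nat filter \<Rightarrow> (nat \<Rightarrow> int) \<Rightarrow> (nat \<Rightarrow> int) \<Rightarrow> real" where
  "phi D l x = (THE r. \<exists>m k1 k2. srep D l m x k1 k2 \<and>
      ((\<lambda>q. real_of_int (k1 q) / real_of_int (k2 q)) \<longlongrightarrow> r) D)"

context
  fixes D :: "nat filter" and l :: "nat \<Rightarrow> int"
  assumes proper: "D \<noteq> bot"
    and ultra: "\<forall>P. eventually P D \<or> eventually (\<lambda>q. \<not> P q) D"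
    and primes: "eventually (\<lambda>q. prime q) D"
    and l_infinite: "\<forall>N::int. eventually (\<lambda>q. l q > N) D"
    and l_small: "\<forall>n::nat. eventually (\<lambda>q. l q ^ n < int q) D"
begin

lemma ev_l2: "eventually (\<lambda>q. l q \<ge> 2) D"
  using l_infinite[rule_format, of 1] by (rule eventually_mono) simp

lemma ultra_lim:
  fixes f :: "nat \<Rightarrow> real"
  assumes "eventually (\<lambda>q. \<bar>f q\<bar> \<le> M) D"
  shows "\<exists>L. (f \<longlongrightarrow> L) D"
proof -
  have cpt: "compact {-M..M}" by simp
  have ev: "eventually (\<lambda>z. z \<in> {-M..M}) (filtermap f D)"
    using assms by (simp add: eventually_filtermap abs_le_iff eventually_mono)
  have ne: "filtermap f D \<noteq> bot" using proper by (simp add: filtermap_bot_iff)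
  obtain L where L: "inf (nhds L) (filtermap f D) \<noteq> bot"
    using cpt[unfolded compact_filter] ev ne by blast
  have "(f \<longlongrightarrow> L) D"
  proof (rule topological_tendstoI)
    fix S :: "real set" assume S: "open S" "L \<in> S"
    show "eventually (\<lambda>q. f q \<in> S) D"
    proof (rule ccontr)
      assume "\<not> ?thesis"
      then have n: "eventually (\<lambda>q. f q \<notin> S) D" using ultra by blast
      have e1: "eventually (\<lambda>z. z \<in> S) (inf (nhds L) (filtermap f D))"
        by (rule filter_leD[OF inf_le1]) (rule eventually_nhds_in_open[OF S])
      have e2: "eventually (\<lambda>z. z \<notin> S) (inf (nhds L) (filtermap f D))"
        by (rule filter_leD[OF inf_le2]) (use n in \<open>simp add: eventually_filtermap\<close>)
      have "eventually (\<lambda>z. False) (inf (nhds L) (filtermap f D))"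
        using eventually_conj[OF e1 e2] by (simp add: eventually_mono)
      with L show False by (simp add: eventually_False)
    qed
  qed
  thus ?thesis by blast
qed

lemma rep_eq:
  assumes "srep D l m x a b" "srep D l m' x c d"
  shows "eventually (\<lambda>q. a q * d q = c q * b q \<and> b q \<noteq> 0 \<and> d q \<noteq> 0) D"
proof -
  have "eventually (\<lambda>q. l q ^ (m+m'+1) < int q) D" using l_small by blast
  with ev_l2 assms show ?thesis unfolding srep_def
  proof eventually_elim
    case (elim q)
    then show ?case using pt_eq[of "a q" "l q" m "b q" "c q" m' "d q" "x q" "int q"] by auto
  qed
qed

lemma phi_char:
  assumes "srep D l m x a b" "((\<lambda>q. real_of_int (a q) / real_of_int (b q)) \<longlongrightarrow> r) D"
  shows "phi D l x = r"
  unfolding phi_def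
proof (rule the_equality)
  show "\<exists>m k1 k2. srep D l m x k1 k2 \<and> ((\<lambda>q. real_of_int (k1 q) / real_of_int (k2 q)) \<longlongrightarrow> r) D"
    using assms by blast
next
  fix r' assume "\<exists>m k1 k2. srep D l m x k1 k2 \<and> ((\<lambda>q. real_of_int (k1 q) / real_of_int (k2 q)) \<longlongrightarrow> r') D"
  then obtain m' c d where c: "srep D l m' x c d" and lim: "((\<lambda>q. real_of_int (c q) / real_of_int (d q)) \<longlongrightarrow> r') D"
    by blast
  have "eventually (\<lambda>q. real_of_int (c q) / real_of_int (d q) = real_of_int (a q) / real_of_int (b q)) D"
    using rep_eq[OF assms(1) c]
  proof eventually_elim
    case (elim q)
    then have "real_of_int (a q) * real_of_int (d q) = real_of_int (c q) * real_of_int (b q)"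
      by (metis of_int_mult)
    with elim show ?case by (simp add: field_simps)
  qed
  then have "((\<lambda>q. real_of_int (a q) / real_of_int (b q)) \<longlongrightarrow> r') D"
    using lim by (rule tendsto_cong[THEN iffD1])
  then show "r' = r" using tendsto_unique[OF proper _ assms(2)] by blast
qed

lemma phi_lim:
  assumes "srep D l m x a b"
  shows "((\<lambda>q. real_of_int (a q) / real_of_int (b q)) \<longlongrightarrow> phi D l x) D"
proof -
  have bd: "eventually (\<lambda>q. \<bar>real_of_int (a q) / real_of_int (b q)\<bar> \<le> real m) D"
    using assms unfolding srep_def
  proof eventually_elim
    case (elim q)
    then have "real_of_int \<bar>a q\<bar> \<le> real m * real_of_int \<bar>b q\<bar>"
      by (metis of_int_le_iff of_int_mult of_int_of_nat_eq)
    with elim show ?case by (simp add: abs_divide divide_le_eq)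
  qed
  then obtain L where L: "((\<lambda>q. real_of_int (a q) / real_of_int (b q)) \<longlongrightarrow> L) D"
    using ultra_lim[OF bd] by blast
  with phi_char[OF assms L] show ?thesis by simp
qed

lemma fnorm_eq:
  assumes "srep D l m x a b"
  shows "fnorm D l x = \<bar>phi D l x\<bar>"
  unfolding fnorm_def
proof (rule the_equality)
  have "((\<lambda>q. \<bar>real_of_int (a q) / real_of_int (b q)\<bar>) \<longlongrightarrow> \<bar>phi D l x\<bar>) D"
    by (rule tendsto_rabs[OF phi_lim[OF assms]])
  then have "((\<lambda>q. real_of_int \<bar>a q\<bar> / real_of_int \<bar>b q\<bar>) \<longlongrightarrow> \<bar>phi D l x\<bar>) D"
    by (simp add: abs_divide)
  then show "\<exists>m k1 k2. srep D l m x k1 k2 \<and> ((\<lambda>q. real_of_int \<bar>k1 q\<bar> / real_of_int \<bar>k2 q\<bar>) \<longlongrightarrow> \<bar>phi D l x\<bar>) D"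
    using assms by blast
next
  fix r' assume "\<exists>m k1 k2. srep D l m x k1 k2 \<and> ((\<lambda>q. real_of_int \<bar>k1 q\<bar> / real_of_int \<bar>k2 q\<bar>) \<longlongrightarrow> r') D"
  then obtain m' c d where c: "srep D l m' x c d" and lim: "((\<lambda>q. real_of_int \<bar>c q\<bar> / real_of_int \<bar>d q\<bar>) \<longlongrightarrow> r') D"
    by blast
  have "((\<lambda>q. \<bar>real_of_int (c q) / real_of_int (d q)\<bar>) \<longlongrightarrow> \<bar>phi D l x\<bar>) D"
    by (rule tendsto_rabs[OF phi_lim[OF c]])
  then have "((\<lambda>q. real_of_int \<bar>c q\<bar> / real_of_int \<bar>d q\<bar>) \<longlongrightarrow> \<bar>phi D l x\<bar>) D"
    by (simp add: abs_divide)
  then show "r' = \<bar>phi D l x\<bar>" using tendsto_unique[OF proper lim] by blast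
qed

end


lemma floor_pt:
  fixes r :: real and L :: int and K :: nat
  assumes "L > int K" "K = nat \<lceil>\<bar>r\<bar>\<rceil> + 2"
  shows "\<bar>\<lfloor>r * of_int L\<rfloor>\<bar> \<le> int K * \<bar>L\<bar>" "\<bar>\<lfloor>r * of_int L\<rfloor>\<bar> < L^K" "\<bar>L\<bar> < L^K" "L \<noteq> 0"
proof -
  have K2: "K \<ge> 2" using assms by simp
  have "int K \<ge> 2" using K2 by simp
  hence L1: "L \<ge> 1" "L > 0" using assms(1) by linarith+
  have c0: "0 \<le> \<lceil>\<bar>r\<bar>\<rceil>" by simp
  have "real K = real (nat \<lceil>\<bar>r\<bar>\<rceil>) + 2" using assms(2) by simp
  also have "real (nat \<lceil>\<bar>r\<bar>\<rceil>) = of_int \<lceil>\<bar>r\<bar>\<rceil>" using c0 by (rule of_nat_nat)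
  finally have "real K = of_int \<lceil>\<bar>r\<bar>\<rceil> + 2" .
  moreover have "\<bar>r\<bar> \<le> of_int \<lceil>\<bar>r\<bar>\<rceil>" by (rule le_of_int_ceiling)
  ultimately have rK: "\<bar>r\<bar> + 1 \<le> real K" by linarith
  have f1: "r * of_int L - 1 < of_int \<lfloor>r * of_int L\<rfloor>" "of_int \<lfloor>r * of_int L\<rfloor> \<le> r * of_int L"
    by linarith+
  have "\<bar>r * of_int L\<bar> = \<bar>r\<bar> * of_int L" using L1 by (simp add: abs_mult)
  hence "real_of_int \<bar>\<lfloor>r * of_int L\<rfloor>\<bar> \<le> \<bar>r\<bar> * of_int L + 1" using f1 by linarith
  also have "\<dots> \<le> \<bar>r\<bar> * of_int L + of_int L" using L1 by simp
  also have "\<dots> = (\<bar>r\<bar> + 1) * of_int L" by (simp add: algebra_simps)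
  also have "\<dots> \<le> real K * of_int L" using rK L1 by (intro mult_right_mono) auto
  finally have "real_of_int \<bar>\<lfloor>r * of_int L\<rfloor>\<bar> \<le> real_of_int (int K * L)" by simp
  hence A: "\<bar>\<lfloor>r * of_int L\<rfloor>\<bar> \<le> int K * L" by linarith
  then show "\<bar>\<lfloor>r * of_int L\<rfloor>\<bar> \<le> int K * \<bar>L\<bar>" using L1 by simp
  have "L^2 \<le> L^K" using K2 L1 by (intro power_increasing) auto
  moreover have "int K * L < L * L" using assms L1 by simp
  ultimately show "\<bar>\<lfloor>r * of_int L\<rfloor>\<bar> < L^K" using A by (simp add: power2_eq_square)
  have "1 < L" using assms(1) \<open>int K \<ge> 2\<close> by linarith
  hence "L * 1 < L * L" using L1 by (intro mult_strict_left_mono) auto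
  hence "L < L * L" by simp
  moreover have "\<bar>L\<bar> = L" using L1 by simp
  ultimately show "\<bar>L\<bar> < L^K" using \<open>L^2 \<le> L^K\<close> unfolding power2_eq_square by linarith
  show "L \<noteq> 0" using L1 by simp
qed

context
  fixes D :: "nat filter" and l :: "nat \<Rightarrow> int"
  assumes proper: "D \<noteq> bot"
    and ultra: "\<forall>P. eventually P D \<or> eventually (\<lambda>q. \<not> P q) D"
    and primes: "eventually (\<lambda>q. prime q) D"
    and l_infinite: "\<forall>N::int. eventually (\<lambda>q. l q > N) D"
    and l_small: "\<forall>n::nat. eventually (\<lambda>q. l q ^ n < int q) D"
begin

lemmas phi_char' = phi_char[OF proper ultra primes l_infinite l_small]
lemmas phi_lim' = phi_lim[OF proper ultra primes l_infinite l_small]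
lemmas fnorm_eq' = fnorm_eq[OF proper ultra primes l_infinite l_small]
lemmas ev_l2' = ev_l2[OF proper ultra primes l_infinite l_small]

lemma Floc_iff: "x \<in> Floc D l \<longleftrightarrow> (\<exists>m a b. srep D l m x a b)"
  by (auto simp: Floc_def Sm_def)

lemma ops:
  assumes x: "x \<in> Floc D l" and y: "y \<in> Floc D l"
  shows "(\<lambda>q. x q + y q) \<in> Floc D l \<and> (\<lambda>q. x q * y q) \<in> Floc D l \<and>
        (\<lambda>q. x q - y q) \<in> Floc D l \<and>
        phi D l (\<lambda>q. x q + y q) = phi D l x + phi D l y \<and> phi D l (\<lambda>q. x q * y q) = phi D l x * phi D l y \<and>
        \<bar>phi D l x - phi D l y\<bar> = fdist D l x y"
proof -
  obtain m a b where ra: "srep D l m x a b" using x Floc_iff by blast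
  obtain m' c d where rc: "srep D l m' y c d" using y Floc_iff by blast
  define M where "M = m*m'+m+m'+1"
  have ev: "eventually (\<lambda>q. (\<bar>a q\<bar> < l q ^ m \<and> \<bar>b q\<bar> < l q ^ m \<and> b q \<noteq> 0 \<and>
                     [x q * b q = a q] (mod int q) \<and> \<bar>a q\<bar> \<le> int m * \<bar>b q\<bar>) \<and>
      (\<bar>c q\<bar> < l q ^ m' \<and> \<bar>d q\<bar> < l q ^ m' \<and> d q \<noteq> 0 \<and>
                     [y q * d q = c q] (mod int q) \<and> \<bar>c q\<bar> \<le> int m' * \<bar>d q\<bar>) \<and> l q \<ge> 2) D"
    by (rule eventually_conj[OF ra[unfolded srep_def] eventually_conj[OF rc[unfolded srep_def] ev_l2']])
  note P = pt_ops[where a="a q" and b="b q" and c="c q" and d="d q" and X="x q" and Y="y q"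
      and L="l q" and Q="int q" and m=m and m'=m' for q, folded M_def]
  have sadd: "srep D l M (\<lambda>q. x q + y q) (\<lambda>q. a q * d q + c q * b q) (\<lambda>q. b q * d q)"
    unfolding srep_def using ev
  proof (rule eventually_mono, goal_cases)
    case (1 q)
    then show ?case by (intro P(1)) blast+
  qed
  have ssub: "srep D l M (\<lambda>q. x q - y q) (\<lambda>q. a q * d q - c q * b q) (\<lambda>q. b q * d q)"
    unfolding srep_def using ev
  proof (rule eventually_mono, goal_cases)
    case (1 q)
    then show ?case by (intro P(2)) blast+
  qed
  have smul: "srep D l M (\<lambda>q. x q * y q) (\<lambda>q. a q * c q) (\<lambda>q. b q * d q)"
    unfolding srep_def using ev
  proof (rule eventually_mono, goal_cases)
    case (1 q)
    then show ?case by (intro P(3)) blast+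
  qed
  have la: "((\<lambda>q. real_of_int (a q) / real_of_int (b q)) \<longlongrightarrow> phi D l x) D" by (rule phi_lim'[OF ra])
  have lc: "((\<lambda>q. real_of_int (c q) / real_of_int (d q)) \<longlongrightarrow> phi D l y) D" by (rule phi_lim'[OF rc])
  have ev0: "eventually (\<lambda>q. b q \<noteq> 0 \<and> d q \<noteq> 0) D" using ev by (rule eventually_mono) blast
  have "((\<lambda>q. real_of_int (a q * d q + c q * b q) / real_of_int (b q * d q)) \<longlongrightarrow> phi D l x + phi D l y) D"
  proof (rule tendsto_cong[THEN iffD1, OF _ tendsto_add[OF la lc]])
    show "eventually (\<lambda>q. real_of_int (a q) / real_of_int (b q) + real_of_int (c q) / real_of_int (d q) =
       real_of_int (a q * d q + c q * b q) / real_of_int (b q * d q)) D"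
      using ev0 by (rule eventually_mono) (simp add: field_simps)
  qed
  hence padd: "phi D l (\<lambda>q. x q + y q) = phi D l x + phi D l y" by (rule phi_char'[OF sadd])
  have "((\<lambda>q. real_of_int (a q * d q - c q * b q) / real_of_int (b q * d q)) \<longlongrightarrow> phi D l x - phi D l y) D"
  proof (rule tendsto_cong[THEN iffD1, OF _ tendsto_diff[OF la lc]])
    show "eventually (\<lambda>q. real_of_int (a q) / real_of_int (b q) - real_of_int (c q) / real_of_int (d q) =
       real_of_int (a q * d q - c q * b q) / real_of_int (b q * d q)) D"
      using ev0 by (rule eventually_mono) (simp add: field_simps)
  qed
  hence psub: "phi D l (\<lambda>q. x q - y q) = phi D l x - phi D l y" by (rule phi_char'[OF ssub])
  have "((\<lambda>q. real_of_int (a q * c q) / real_of_int (b q * d q)) \<longlongrightarrow> phi D l x * phi D l y) D"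
  proof (rule tendsto_cong[THEN iffD1, OF _ tendsto_mult[OF la lc]])
    show "eventually (\<lambda>q. real_of_int (a q) / real_of_int (b q) * (real_of_int (c q) / real_of_int (d q)) =
       real_of_int (a q * c q) / real_of_int (b q * d q)) D"
      using ev0 by (rule eventually_mono) (simp add: field_simps)
  qed
  hence pmul: "phi D l (\<lambda>q. x q * y q) = phi D l x * phi D l y" by (rule phi_char'[OF smul])
  have fd: "fdist D l x y = \<bar>phi D l x - phi D l y\<bar>"
    unfolding fdist_def fnorm_eq'[OF ssub] psub ..
  have "(\<lambda>q. x q + y q) \<in> Floc D l" using sadd Floc_iff by blast
  moreover have "(\<lambda>q. x q - y q) \<in> Floc D l" using ssub Floc_iff by blast
  moreover have "(\<lambda>q. x q * y q) \<in> Floc D l" using smul Floc_iff by blast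
  ultimately show ?thesis using padd pmul fd by simp
qed

end


context
  fixes D :: "nat filter" and l :: "nat \<Rightarrow> int"
  assumes proper: "D \<noteq> bot"
    and ultra: "\<forall>P. eventually P D \<or> eventually (\<lambda>q. \<not> P q) D"
    and primes: "eventually (\<lambda>q. prime q) D"
    and l_infinite: "\<forall>N::int. eventually (\<lambda>q. l q > N) D"
    and l_small: "\<forall>n::nat. eventually (\<lambda>q. l q ^ n < int q) D"
begin

lemmas phi_char'' = phi_char[OF proper ultra primes l_infinite l_small]
lemmas ev_l2'' = ev_l2[OF proper ultra primes l_infinite l_small]
lemmas ops' = ops[OF proper ultra primes l_infinite l_small]
lemmas Floc_iff' = Floc_iff[OF proper ultra primes l_infinite l_small]

lemma one_in: "(\<lambda>q. 1) \<in> Floc D l \<and> phi D l (\<lambda>q. 1) = 1"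
proof -
  have s: "srep D l 2 (\<lambda>q. 1) (\<lambda>q. 1) (\<lambda>q. 1)"
    unfolding srep_def using ev_l2''
  proof (rule eventually_mono)
    fix q assume "l q \<ge> 2"
    then have "1 < l q ^ 2" by (smt (verit) one_le_power power2_eq_square mult_le_cancel_left1)
    then show "\<bar>1::int\<bar> < l q ^ 2 \<and> \<bar>1::int\<bar> < l q ^ 2 \<and> (1::int) \<noteq> 0 \<and> [1 * 1 = 1] (mod int q) \<and> \<bar>1::int\<bar> \<le> int 2 * \<bar>1\<bar>"
      by simp
  qed
  have "phi D l (\<lambda>q. 1) = 1" by (rule phi_char''[OF s]) simp
  with s show ?thesis using Floc_iff' by blast
qed

lemma surj_pt:
  fixes r :: real
  shows "\<exists>x\<in>Floc D l. phi D l x = r"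
proof -
  define K where "K = nat \<lceil>\<bar>r\<bar>\<rceil> + 2"
  define iv where "iv q = (SOME u. [l q * u = 1] (mod int q))" for q
  define k1 where "k1 q = \<lfloor>r * of_int (l q)\<rfloor>" for q
  define x where "x q = k1 q * iv q" for q
  have ev: "eventually (\<lambda>q. prime q \<and> l q > int K \<and> l q ^ 1 < int q) D"
    by (rule eventually_conj[OF primes eventually_conj[OF l_infinite[rule_format, of "int K"] l_small[rule_format, of 1]]])
  have s: "srep D l K x k1 l"
    unfolding srep_def using ev
  proof (rule eventually_mono)
    fix q assume H: "prime q \<and> l q > int K \<and> l q ^ 1 < int q"
    have HK: "int K < l q" using H by simp
    have fp: "\<bar>k1 q\<bar> \<le> int K * \<bar>l q\<bar>" "\<bar>k1 q\<bar> < l q ^ K" "\<bar>l q\<bar> < l q ^ K" "l q \<noteq> 0"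
      unfolding k1_def using floor_pt[OF HK K_def] by blast+
    have pq: "prime (int q)" using H by simp
    have "l q > 0" using H by simp
    hence "\<not> int q dvd l q" using H zdvd_not_zless by auto
    hence "coprime (int q) (l q)" using prime_imp_coprime pq by blast
    hence "coprime (l q) (int q)" by (simp add: coprime_commute)
    hence "\<exists>u. [l q * u = 1] (mod int q)" by (rule cong_solve_coprime_int)
    hence ivc: "[l q * iv q = 1] (mod int q)" unfolding iv_def by (rule someI_ex)
    have "[k1 q * (l q * iv q) = k1 q * 1] (mod int q)" by (rule cong_mult[OF cong_refl ivc])
    hence "[x q * l q = k1 q] (mod int q)" by (simp add: x_def algebra_simps)
    with fp show "\<bar>k1 q\<bar> < l q ^ K \<and> \<bar>l q\<bar> < l q ^ K \<and> l q \<noteq> 0 \<and>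
        [x q * l q = k1 q] (mod int q) \<and> \<bar>k1 q\<bar> \<le> int K * \<bar>l q\<bar>" by blast
  qed
  have lim: "((\<lambda>q. real_of_int (k1 q) / real_of_int (l q)) \<longlongrightarrow> r) D"
    unfolding tendsto_iff dist_real_def
  proof (intro allI impI)
    fix e :: real assume e: "e > 0"
    show "eventually (\<lambda>q. \<bar>real_of_int (k1 q) / real_of_int (l q) - r\<bar> < e) D"
      using l_infinite[rule_format, of "max 1 \<lceil>1/e\<rceil>"]
    proof (rule eventually_mono)
      fix q assume "max 1 \<lceil>1/e\<rceil> < l q"
      hence L: "real_of_int (l q) > 1/e" "real_of_int (l q) > 0"
        by (linarith, simp)
      hence le: "1 / real_of_int (l q) < e" using e by (simp add: field_simps)
      have f1: "r * of_int (l q) - 1 < of_int (k1 q)" "of_int (k1 q) \<le> r * of_int (l q)"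
        unfolding k1_def by linarith+
      have "real_of_int (k1 q) / real_of_int (l q) - r = (real_of_int (k1 q) - r * of_int (l q)) / real_of_int (l q)"
        using L by (simp add: field_simps)
      also have "\<bar>\<dots>\<bar> = \<bar>real_of_int (k1 q) - r * of_int (l q)\<bar> / real_of_int (l q)"
        using L by (simp add: abs_divide)
      also have "\<dots> < 1 / real_of_int (l q)" using L f1 by (intro divide_strict_right_mono) auto
      finally show "\<bar>real_of_int (k1 q) / real_of_int (l q) - r\<bar> < e" using le by linarith
    qed
  qed
  have "phi D l x = r" by (rule phi_char''[OF s lim])
  moreover have "x \<in> Floc D l" using s Floc_iff' by blast
  ultimately show ?thesis by blast
qed

lemma main:
  "\<exists>\<phi> :: (nat \<Rightarrow> int) \<Rightarrow> real.
     (\<forall>x\<in>Floc D l. \<forall>y\<in>Floc D l.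
        (\<lambda>q. x q + y q) \<in> Floc D l \<and> (\<lambda>q. x q * y q) \<in> Floc D l \<and>
        (\<lambda>q. x q - y q) \<in> Floc D l \<and>
        \<phi> (\<lambda>q. x q + y q) = \<phi> x + \<phi> y \<and> \<phi> (\<lambda>q. x q * y q) = \<phi> x * \<phi> y \<and>
        \<bar>\<phi> x - \<phi> y\<bar> = fdist D l x y \<and>
        (\<phi> x = \<phi> y \<longleftrightarrow> (\<forall>n::nat>0. fdist D l x y \<le> 1 / real n))) \<and>
     (\<lambda>q. 1) \<in> Floc D l \<and> \<phi> (\<lambda>q. 1) = 1 \<and>
     \<phi> ` Floc D l = UNIV"
proof (intro exI[of _ "phi D l"] conjI ballI)
  fix x y assume x: "x \<in> Floc D l" and y: "y \<in> Floc D l"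
  note o = ops'[OF x y]
  show "(\<lambda>q. x q + y q) \<in> Floc D l" "(\<lambda>q. x q * y q) \<in> Floc D l" "(\<lambda>q. x q - y q) \<in> Floc D l"
    "phi D l (\<lambda>q. x q + y q) = phi D l x + phi D l y" "phi D l (\<lambda>q. x q * y q) = phi D l x * phi D l y"
    "\<bar>phi D l x - phi D l y\<bar> = fdist D l x y" using o by blast+
  show "(phi D l x = phi D l y) = (\<forall>n::nat>0. fdist D l x y \<le> 1 / real n)"
  proof
    assume "phi D l x = phi D l y"
    then show "\<forall>n::nat>0. fdist D l x y \<le> 1 / real n" using o by (metis abs_zero diff_self of_nat_0_le_iff divide_nonneg_nonneg zero_le_one)
  next
    assume H: "\<forall>n::nat>0. fdist D l x y \<le> 1 / real n"
    show "phi D l x = phi D l y"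
    proof (rule ccontr)
      assume "phi D l x \<noteq> phi D l y"
      hence "fdist D l x y > 0" using o by auto
      then obtain n where n: "n > 0" "inverse (real n) < fdist D l x y"
        using ex_inverse_of_nat_less by blast
      with H show False by (simp add: inverse_eq_divide) (smt (verit) H)
    qed
  qed
next
  show "(\<lambda>q. 1) \<in> Floc D l" using one_in by blast
  show "phi D l (\<lambda>q. 1) = 1" using one_in by blast
  show "phi D l ` Floc D l = UNIV" using surj_pt by (auto simp: image_iff) metis
qed

end


theorem proposition3p4:
  fixes D :: "nat filter" and l :: "nat \<Rightarrow> int"
  assumes proper: "D \<noteq> bot"
    and ultra: "\<forall>P. eventually P D \<or> eventually (\<lambda>q. \<not> P q) D"
    and nonprincipal: "\<forall>n. eventually (\<lambda>q. q \<noteq> n) D"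
    and primes: "eventually (\<lambda>q. prime q) D"
    and l_infinite: "\<forall>N::int. eventually (\<lambda>q. l q > N) D"
    and l_small: "\<forall>n::nat. eventually (\<lambda>q. l q ^ n < int q) D"
  shows "\<exists>\<phi> :: (nat \<Rightarrow> int) \<Rightarrow> real.
     (\<forall>x\<in>Floc D l. \<forall>y\<in>Floc D l.
        (\<lambda>q. x q + y q) \<in> Floc D l \<and> (\<lambda>q. x q * y q) \<in> Floc D l \<and>
        (\<lambda>q. x q - y q) \<in> Floc D l \<and>
        \<phi> (\<lambda>q. x q + y q) = \<phi> x + \<phi> y \<and> \<phi> (\<lambda>q. x q * y q) = \<phi> x * \<phi> y \<and>
        \<bar>\<phi> x - \<phi> y\<bar> = fdist D l x y \<and>
        (\<phi> x = \<phi> y \<longleftrightarrow> (\<forall>n::nat>0. fdist D l x y \<le> 1 / real n))) \<and>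
     (\<lambda>q. 1) \<in> Floc D l \<and> \<phi> (\<lambda>q. 1) = 1 \<and>
     \<phi> ` Floc D l = UNIV"
  using main[OF proper ultra primes l_infinite l_small] .

end
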